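(* Let $k\in[n]$, let $\Gamma^{-1/2}\Sigma\Gamma^{-1/2}=V\Lambda V^T$ with $V$ orthogonal and $\Lambda=\mathrm{diag}(\lambda_1,\dots,\lambda_n)$, and let $A$ be the symmetric matrix with $A_{ii}=\frac{V_{ki}^2}{4\lambda_i}+\sum_{\ell=1}^n\frac{V_{k\ell}^2}{2(\lambda_i+\lambda_\ell)}$ and $A_{ij}=\frac{V_{ki}V_{kj}}{2(\lambda_i+\lambda_j)}$ for $i\neq j$. Then all eigenvalues of $\Lambda^{1/2}A\Lambda^{1/2}$ are real and lie in the open interval $(0,1)$.
   Context: $\Sigma\in\mathbb{R}^{n\times n}$ is symmetric positive definite and $\Gamma=\mathrm{diag}(\gamma_1,\dots,\gamma_n)$ with all $\gamma_i>0$; hence $\Gamma^{-1/2}\Sigma\Gamma^{-1/2}$ is symmetric positive definite and all $\lambda_i>0$. *)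

theory Defs
  imports "HOL-Analysis.Analysis"
begin

definition diag_mat :: "('n::finite \<Rightarrow> real) \<Rightarrow> real^'n^'n" where
  "diag_mat d = (\<chi> i j. if i = j then d i else 0)"

definition pos_def :: "real^'n^'n \<Rightarrow> bool" where
  "pos_def S \<longleftrightarrow> transpose S = S \<and> (\<forall>x. x \<noteq> 0 \<longrightarrow> x \<bullet> (S *v x) > 0)"

definition complex_eigenvalue :: "real^'n^'n \<Rightarrow> complex \<Rightarrow> bool" where
  "complex_eigenvalue M mu \<longleftrightarrow>
     (\<exists>v :: complex^'n. v \<noteq> 0 \<and>
        (\<chi> i j. complex_of_real (M $ i $ j)) *v v = mu *s v)"

end

theory Submission
  imports Defs
begin

lemma row_norm:
  fixes V :: "real^'n^'n"
  assumes "orthogonal_matrix V"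
  shows "(\<Sum>l\<in>UNIV. (V $ k $ l)\<^sup>2) = 1"
proof -
  have "(V ** transpose V) $ k $ k = 1" using assms by (simp add: orthogonal_matrix_def mat_def)
  thus ?thesis by (simp add: matrix_matrix_mult_def transpose_def power2_eq_square)
qed

lemma diag_entry:
  fixes B :: "real^'n^'n"
  shows "(diag_mat d ** B ** diag_mat d) $ i $ j = d i * B $ i $ j * d j"
  by (simp add: matrix_matrix_mult_def diag_mat_def if_distrib if_distribR sum.delta sum.delta' cong: if_cong)

lemma cs_ineq:
  fixes a b p q :: real
  assumes "p > 0" "q > 0"
  shows "(a + b)\<^sup>2 / (4 * (p + q)) \<le> (a\<^sup>2 / p + b\<^sup>2 / q) / 4"
proof -
  have "(a^2/p + b^2/q) * (p + q) - (a+b)^2 = (a*q - b*p)^2/(p*q)"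
    using assms by (simp add: field_simps power2_eq_square)
  also have "\<dots> \<ge> 0" using assms by simp
  finally have "(a+b)^2 \<le> (a^2/p + b^2/q) * (p + q)" by simp
  thus ?thesis using assms by (simp add: field_simps)
qed


lemma sq_split: fixes a b d :: real
  shows "(a+b)\<^sup>2/(4*d) = a\<^sup>2/(4*d) + a*b/(2*d) + b\<^sup>2/(4*d)"
  by (cases "d=0") (simp_all add: field_simps power2_eq_square)

lemma half_split: fixes c d :: real
  shows "c/(2*d) = c/(4*d) + c/(4*d)"
  by (cases "d=0") (simp_all add: field_simps)

lemma quad_identity:
  fixes x v lam :: "'n::finite \<Rightarrow> real"
  shows "(\<Sum>i\<in>UNIV. \<Sum>j\<in>UNIV. (v i * v j / (2*(lam i + lam j)) +
            (if i = j then (\<Sum>l\<in>UNIV. (v l)\<^sup>2 / (2*(lam i + lam l))) else 0)) * x i * x j)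
       = (\<Sum>i\<in>UNIV. \<Sum>l\<in>UNIV. (x i * v l + x l * v i)\<^sup>2 / (4*(lam i + lam l)))"
proof -
  have L: "(\<Sum>i\<in>UNIV. \<Sum>j\<in>UNIV. (v i * v j / (2*(lam i + lam j)) +
            (if i = j then (\<Sum>l\<in>UNIV. (v l)\<^sup>2 / (2*(lam i + lam l))) else 0)) * x i * x j)
     = (\<Sum>i\<in>UNIV. \<Sum>l\<in>UNIV. x i * x l * v i * v l / (2*(lam i + lam l)))
       + (\<Sum>i\<in>UNIV. \<Sum>l\<in>UNIV. (x i)\<^sup>2 * (v l)\<^sup>2 / (2*(lam i + lam l)))"
  proof -
    have e: "\<And>i j. (v i * v j / (2*(lam i + lam j)) +
            (if i = j then (\<Sum>l\<in>UNIV. (v l)\<^sup>2 / (2*(lam i + lam l))) else 0)) * x i * x j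
          = x i * x j * v i * v j / (2*(lam i + lam j)) +
            (if i = j then (\<Sum>l\<in>UNIV. (x i)\<^sup>2 * (v l)\<^sup>2 / (2*(lam i + lam l))) else 0)"
      by (auto simp: sum_distrib_left field_simps power2_eq_square)
    show ?thesis unfolding e sum.distrib by simp
  qed
  have sw: "(\<Sum>i\<in>UNIV. \<Sum>l\<in>UNIV. (x l)\<^sup>2 * (v i)\<^sup>2 / (4*(lam i + lam l)))
        = (\<Sum>i\<in>UNIV. \<Sum>l\<in>UNIV. (x i)\<^sup>2 * (v l)\<^sup>2 / (4*(lam i + lam l)))"
    by (subst sum.swap) (simp add: add.commute)
  have R: "(\<Sum>i\<in>UNIV. \<Sum>l\<in>UNIV. (x i * v l + x l * v i)\<^sup>2 / (4*(lam i + lam l)))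
     = (\<Sum>i\<in>UNIV. \<Sum>l\<in>UNIV. (x i)\<^sup>2 * (v l)\<^sup>2 / (4*(lam i + lam l)))
       + (\<Sum>i\<in>UNIV. \<Sum>l\<in>UNIV. x i * x l * v i * v l / (2*(lam i + lam l)))
       + (\<Sum>i\<in>UNIV. \<Sum>l\<in>UNIV. (x l)\<^sup>2 * (v i)\<^sup>2 / (4*(lam i + lam l)))"
    unfolding sum.distrib[symmetric]
  proof (intro sum.cong refl)
    fix i l
    show "(x i * v l + x l * v i)\<^sup>2 / (4*(lam i + lam l)) =
       (x i)\<^sup>2 * (v l)\<^sup>2 / (4*(lam i + lam l)) + x i * x l * v i * v l / (2*(lam i + lam l))
       + (x l)\<^sup>2 * (v i)\<^sup>2 / (4*(lam i + lam l))"
      using sq_split[of "x i * v l" "x l * v i" "lam i + lam l"]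
      by (simp add: power_mult_distrib mult_ac)
  qed
  have D: "(\<Sum>i\<in>UNIV. \<Sum>l\<in>UNIV. (x i)\<^sup>2 * (v l)\<^sup>2 / (2*(lam i + lam l)))
     = (\<Sum>i\<in>UNIV. \<Sum>l\<in>UNIV. (x i)\<^sup>2 * (v l)\<^sup>2 / (4*(lam i + lam l)))
      + (\<Sum>i\<in>UNIV. \<Sum>l\<in>UNIV. (x i)\<^sup>2 * (v l)\<^sup>2 / (4*(lam i + lam l)))"
    unfolding sum.distrib[symmetric]
    by (intro sum.cong refl) (rule half_split)
  show ?thesis unfolding L R sw D by simp
qed


lemma quad_bounds:
  fixes y v lam :: "'n::finite \<Rightarrow> real"
  assumes lp: "\<forall>i. lam i > 0" and vn: "(\<Sum>l\<in>UNIV. (v l)\<^sup>2) = 1"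
  defines "Q \<equiv> (\<Sum>i\<in>UNIV. \<Sum>j\<in>UNIV. (sqrt (lam i) * (v i * v j / (2*(lam i + lam j)) +
            (if i = j then (\<Sum>l\<in>UNIV. (v l)\<^sup>2 / (2*(lam i + lam l))) else 0)) * sqrt (lam j)) * y i * y j)"
  shows "0 \<le> Q" "(\<exists>i. y i \<noteq> 0) \<Longrightarrow> 0 < Q" "Q \<le> (\<Sum>i\<in>UNIV. (y i)\<^sup>2) / 2"
proof -
  define x where "x i = sqrt (lam i) * y i" for i
  define T where "T i l = (x i * v l + x l * v i)\<^sup>2 / (4*(lam i + lam l))" for i l
  have QT: "Q = (\<Sum>i\<in>UNIV. \<Sum>l\<in>UNIV. T i l)"
  proof -
    have "Q = (\<Sum>i\<in>UNIV. \<Sum>j\<in>UNIV. (v i * v j / (2*(lam i + lam j)) +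
            (if i = j then (\<Sum>l\<in>UNIV. (v l)\<^sup>2 / (2*(lam i + lam l))) else 0)) * x i * x j)"
      unfolding Q_def x_def by (simp add: mult_ac)
    also have "\<dots> = (\<Sum>i\<in>UNIV. \<Sum>l\<in>UNIV. T i l)"
      unfolding T_def by (rule quad_identity)
    finally show ?thesis .
  qed
  have Tnn: "T i l \<ge> 0" for i l using lp unfolding T_def
    by (simp add: add_pos_pos less_imp_le)
  show nn: "0 \<le> Q" unfolding QT by (intro sum_nonneg) (simp add: Tnn)
  show "0 < Q" if ex: "\<exists>i. y i \<noteq> 0"
  proof (rule ccontr)
    assume "\<not> 0 < Q"
    hence Q0: "Q = 0" using nn by simp
    have "\<forall>i\<in>UNIV. (\<Sum>l\<in>UNIV. T i l) = 0"
    proof -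
      have "(\<Sum>i\<in>UNIV. \<Sum>l\<in>UNIV. T i l) = 0" using Q0 QT by simp
      moreover have "\<forall>i\<in>UNIV. 0 \<le> (\<Sum>l\<in>UNIV. T i l)" using Tnn by (simp add: sum_nonneg)
      ultimately show ?thesis using sum_nonneg_eq_0_iff[of UNIV "\<lambda>i. \<Sum>l\<in>UNIV. T i l"] by simp
    qed
    hence "T i l = 0" for i l
      using sum_nonneg_eq_0_iff[of UNIV "T i"] Tnn by simp
    hence z: "x i * v l + x l * v i = 0" for i l
    proof -
      have "lam i + lam l > 0" using lp by (simp add: add_pos_pos)
      thus ?thesis using \<open>T i l = 0\<close> unfolding T_def by simp
    qed
    have "\<exists>l0. v l0 \<noteq> 0"
    proof (rule ccontr)
      assume "\<nexists>l0. v l0 \<noteq> 0"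
      hence "(\<Sum>l\<in>UNIV. (v l)\<^sup>2) = 0" by simp
      thus False using vn by simp
    qed
    then obtain l0 where l0: "v l0 \<noteq> 0" by blast
    have "x l0 = 0" using z[of l0 l0] l0 by simp
    hence "x i = 0" for i using z[of i l0] l0 by simp
    hence "y i = 0" for i by (metis lp mult_eq_0_iff x_def less_irrefl real_sqrt_eq_zero_cancel_iff)
    thus False using ex by simp
  qed
  have Tle: "T i l \<le> ((x i * v l)\<^sup>2 / lam i + (x l * v i)\<^sup>2 / lam l) / 4" for i l
    unfolding T_def using cs_ineq lp by blast
  have xs: "(x i * v l)\<^sup>2 / lam i = (y i)\<^sup>2 * (v l)\<^sup>2" for i l
  proof -
    have "(sqrt (lam i))\<^sup>2 = lam i" using lp[rule_format, of i] by simp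
    thus ?thesis using lp[rule_format, of i] by (simp add: x_def power_mult_distrib)
  qed
  have "Q \<le> (\<Sum>i\<in>UNIV. \<Sum>l\<in>UNIV. ((y i)\<^sup>2 * (v l)\<^sup>2 + (y l)\<^sup>2 * (v i)\<^sup>2) / 4)"
    unfolding QT using Tle xs by (intro sum_mono) simp
  also have "\<dots> = (\<Sum>i\<in>UNIV. \<Sum>l\<in>UNIV. (y i)\<^sup>2 * (v l)\<^sup>2) / 4
                 + (\<Sum>i\<in>UNIV. \<Sum>l\<in>UNIV. (y l)\<^sup>2 * (v i)\<^sup>2) / 4"
    by (simp add: sum.distrib add_divide_distrib sum_divide_distrib)
  also have "(\<Sum>i\<in>UNIV. \<Sum>l\<in>UNIV. (y l)\<^sup>2 * (v i)\<^sup>2) = (\<Sum>i\<in>UNIV. \<Sum>l\<in>UNIV. (y i)\<^sup>2 * (v l)\<^sup>2)"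
    by (rule sum.swap)
  also have "(\<Sum>i\<in>UNIV. \<Sum>l\<in>UNIV. (y i)\<^sup>2 * (v l)\<^sup>2) = (\<Sum>i\<in>UNIV. (y i)\<^sup>2)"
    by (simp add: sum_distrib_left[symmetric] vn)
  finally show "Q \<le> (\<Sum>i\<in>UNIV. (y i)\<^sup>2) / 2" by simp
qed


theorem mainTheorem3:
  fixes Sigma V :: "real^'n^'n"
    and gamma lambda :: "'n \<Rightarrow> real"
    and k :: 'n
  assumes Sigma_pd: "pos_def Sigma"
    and gamma_pos: "\<forall>i. gamma i > 0"
    and V_orth: "orthogonal_matrix V"
    and decomp: "diag_mat (\<lambda>i. 1 / sqrt (gamma i)) ** Sigma ** diag_mat (\<lambda>i. 1 / sqrt (gamma i))
                 = V ** diag_mat lambda ** transpose V"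
    and lambda_pos: "\<forall>i. lambda i > 0"
  shows "\<forall>mu. complex_eigenvalue
            (diag_mat (\<lambda>i. sqrt (lambda i)) **
             (\<chi> i j. if i = j
                      then (V $ k $ i)\<^sup>2 / (4 * lambda i)
                           + (\<Sum>l\<in>UNIV. (V $ k $ l)\<^sup>2 / (2 * (lambda i + lambda l)))
                      else V $ k $ i * V $ k $ j / (2 * (lambda i + lambda j))) **
             diag_mat (\<lambda>i. sqrt (lambda i))) mu
          \<longrightarrow> Im mu = 0 \<and> 0 < Re mu \<and> Re mu < 1"
proof (intro allI impI)
  fix mu
  define v where "v l = V $ k $ l" for l
  define Af where "Af i j = v i * v j / (2*(lambda i + lambda j)) +
            (if i = j then (\<Sum>l\<in>UNIV. (v l)\<^sup>2 / (2*(lambda i + lambda l))) else 0)" for i j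
  define Mf where "Mf i j = sqrt (lambda i) * Af i j * sqrt (lambda j)" for i j
  have vn: "(\<Sum>l\<in>UNIV. (v l)\<^sup>2) = 1" using row_norm[OF V_orth] by (simp add: v_def)
  have Aeq: "(\<chi> i j. if i = j
                      then (V $ k $ i)\<^sup>2 / (4 * lambda i)
                           + (\<Sum>l\<in>UNIV. (V $ k $ l)\<^sup>2 / (2 * (lambda i + lambda l)))
                      else V $ k $ i * V $ k $ j / (2 * (lambda i + lambda j))) = (\<chi> i j. Af i j)"
    by (simp add: vec_eq_iff Af_def v_def power2_eq_square)
  have Msym: "Mf i j = Mf j i" for i j
    by (simp add: Mf_def Af_def add.commute mult.commute)
  define Q where "Q y = (\<Sum>i\<in>UNIV. \<Sum>j\<in>UNIV. Mf i j * y i * y j)" for y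
  have QB: "0 \<le> Q y" "(\<exists>i. y i \<noteq> 0) \<Longrightarrow> 0 < Q y" "Q y \<le> (\<Sum>i\<in>UNIV. (y i)\<^sup>2) / 2" for y
    using quad_bounds[OF lambda_pos vn, of y] unfolding Q_def Mf_def Af_def by auto
  assume "complex_eigenvalue
            (diag_mat (\<lambda>i. sqrt (lambda i)) **
             (\<chi> i j. if i = j
                      then (V $ k $ i)\<^sup>2 / (4 * lambda i)
                           + (\<Sum>l\<in>UNIV. (V $ k $ l)\<^sup>2 / (2 * (lambda i + lambda l)))
                      else V $ k $ i * V $ k $ j / (2 * (lambda i + lambda j))) **
             diag_mat (\<lambda>i. sqrt (lambda i))) mu"
  then obtain w :: "complex^'n" where w0: "w \<noteq> 0"
    and ev: "(\<chi> i j. complex_of_real (Mf i j)) *v w = mu *s w"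
    unfolding complex_eigenvalue_def Aeq by (auto simp: diag_entry Mf_def)
  have comp: "(\<Sum>j\<in>UNIV. complex_of_real (Mf i j) * w $ j) = mu * w $ i" for i
    using ev by (simp add: vec_eq_iff matrix_vector_mult_def)
  define p where "p i = Re (w $ i)" for i
  define q where "q i = Im (w $ i)" for i
  define N where "N = (\<Sum>i\<in>UNIV. (p i)\<^sup>2 + (q i)\<^sup>2)"
  have key: "(\<Sum>i\<in>UNIV. cnj (w $ i) * (\<Sum>j\<in>UNIV. complex_of_real (Mf i j) * w $ j))
        = mu * (\<Sum>i\<in>UNIV. cnj (w $ i) * w $ i)"
    by (simp only: comp) (simp add: sum_distrib_left mult_ac)
  have reL: "Re (\<Sum>i\<in>UNIV. cnj (w $ i) * (\<Sum>j\<in>UNIV. complex_of_real (Mf i j) * w $ j)) = Q p + Q q"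
    by (simp add: Q_def p_def q_def sum_distrib_left sum.distrib[symmetric] algebra_simps)
  have imL: "Im (\<Sum>i\<in>UNIV. cnj (w $ i) * (\<Sum>j\<in>UNIV. complex_of_real (Mf i j) * w $ j)) = 0"
  proof -
    have "Im (\<Sum>i\<in>UNIV. cnj (w $ i) * (\<Sum>j\<in>UNIV. complex_of_real (Mf i j) * w $ j))
        = (\<Sum>i\<in>UNIV. \<Sum>j\<in>UNIV. Mf i j * p i * q j) - (\<Sum>i\<in>UNIV. \<Sum>j\<in>UNIV. Mf i j * q i * p j)"
      by (simp add: p_def q_def sum_distrib_left sum_subtractf[symmetric] algebra_simps)
    also have "(\<Sum>i\<in>UNIV. \<Sum>j\<in>UNIV. Mf i j * q i * p j) = (\<Sum>i\<in>UNIV. \<Sum>j\<in>UNIV. Mf i j * p i * q j)"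
      by (subst sum.swap) (simp add: Msym mult_ac)
    finally show ?thesis by simp
  qed
  have Rr: "Re (mu * (\<Sum>i\<in>UNIV. cnj (w $ i) * w $ i)) = Re mu * N"
    and Ri: "Im (mu * (\<Sum>i\<in>UNIV. cnj (w $ i) * w $ i)) = Im mu * N"
    by (simp_all add: N_def p_def q_def power2_eq_square sum.distrib)
  have ex: "(\<exists>i. p i \<noteq> 0) \<or> (\<exists>i. q i \<noteq> 0)"
  proof (rule ccontr)
    assume "\<not> ?thesis"
    hence "w $ i = 0" for i by (simp add: p_def q_def complex_eq_iff)
    hence "w = 0" by (simp add: vec_eq_iff)
    thus False using w0 by simp
  qed
  have Qpos: "0 < Q p + Q q" using ex QB(1)[of p] QB(1)[of q] QB(2)[of p] QB(2)[of q] by (metis add_pos_nonneg add_nonneg_pos)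
  have Qle: "Q p + Q q \<le> N / 2" using QB(3)[of p] QB(3)[of q] by (simp add: N_def sum.distrib)
  have Nnn: "N \<ge> 0" unfolding N_def by (intro sum_nonneg) simp
  have Npos: "N > 0" using Qpos Qle Nnn by linarith
  have "Im mu * N = 0" using key imL Ri by metis
  hence "Im mu = 0" using Npos by simp
  moreover have eqR: "Re mu * N = Q p + Q q" using key reL Rr by metis
  have "0 < Re mu" using eqR Qpos Npos by (metis zero_less_mult_pos2)
  moreover have "Re mu * N \<le> (1/2) * N" using eqR Qle by simp
  hence "Re mu \<le> 1/2" using Npos by simp
  ultimately show "Im mu = 0 \<and> 0 < Re mu \<and> Re mu < 1" by simp
qed

end
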